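(* Let $\lambda>0$, $r>0$, and suppose $\boldsymbol{\theta}\mapsto f_{\boldsymbol{\theta}}(\mathbf{X})$ is $\mathrm{Lip}(f)$-Lipschitz (w.r.t. the $\ell_2$ norm) on the closed $\ell_2$-ball of radius $r$ around $\boldsymbol{\theta}_0$. Let $(\boldsymbol{\theta}_s)_{s\ge0}$ be an absolutely continuous trajectory with $\boldsymbol{\theta}_{s}|_{s=0}=\boldsymbol{\theta}_0$ satisfying, for almost every $s$, the selectively regularized gradient flow $$\frac{d}{ds}\boldsymbol{\theta}_s=-\nabla\widetilde{\mathcal{R}}(\boldsymbol{\theta}_s)^{\top}-\lambda_s(\boldsymbol{\theta}_s-\boldsymbol{\theta}_0),\qquad \lambda_s=\begin{cases}\lambda &\text{if } \nabla\widetilde{\mathcal{R}}(\boldsymbol{\theta}_s)(\boldsymbol{\theta}_s-\boldsymbol{\theta}_0)\ge 0,\\ 0&\text{otherwise,}\end{cases}$$ and put $\Lambda_t=\int_0^t\lambda_s\,ds$. Then for every $t\ge0$ such that $\boldsymbol{\theta}_s$ lies in that ball for all $s\in[0,t]$, $$\|\boldsymbol{\theta}_t-\boldsymbol{\theta}_0\|\le 2\,\mathrm{Lip}(f)\,\|f_{\boldsymbol{\theta}_0}(\mathbf{X})-\mathbf{Y}\|\int_0^t e^{-(\Lambda_t-\Lambda_s)}\,ds .$$ In the special case where $\lambda_s=\lambda$ for all $s\in[0,t]$, this gives $$\|\boldsymbol{\theta}_t-\boldsymbol{\theta}_0\|\le 2\,\mathrm{Lip}(f)\,\|f_{\boldsymbol{\theta}_0}(\mathbf{X})-\mathbf{Y}\|\,\frac{1-e^{-\lambda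 t}}{\lambda}.$$
   Context: A model $f_{\boldsymbol{\theta}}:\mathbb{R}^d\to\mathbb{R}$ has parameters $\boldsymbol{\theta}\in\mathbb{R}^p$, continuously differentiable in $\boldsymbol{\theta}$; $\boldsymbol{\theta}_0$ are the pretrained parameters. Data $\mathbf{x}_1,\dots,\mathbf{x}_n\in\mathbb{R}^d$, targets $\mathbf{Y}\in\mathbb{R}^n$, $f_{\boldsymbol{\theta}}(\mathbf{X})=(f_{\boldsymbol{\theta}}(\mathbf{x}_i))_{i=1}^n\in\mathbb{R}^n$, Jacobian $\nabla f_{\boldsymbol{\theta}}(\mathbf{X})\in\mathbb{R}^{n\times p}$. Squared-loss risk $\widetilde{\mathcal{R}}(\boldsymbol{\theta})=\|f_{\boldsymbol{\theta}}(\mathbf{X})-\mathbf{Y}\|_2^2$ with row-vector gradient $\nabla\widetilde{\mathcal{R}}(\boldsymbol{\theta})=2(f_{\boldsymbol{\theta}}(\mathbf{X})-\mathbf{Y})^{\top}\nabla f_{\boldsymbol{\theta}}(\mathbf{X})$. All vector norms are Euclidean. *)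

theory Defs
  imports "HOL-Analysis.Analysis"
begin

definition abs_continuous_on :: "real set \<Rightarrow> (real \<Rightarrow> 'a::real_normed_vector) \<Rightarrow> bool" where
  "abs_continuous_on I g \<longleftrightarrow>
     (\<forall>\<epsilon>>0. \<exists>\<delta>>0. \<forall>(n::nat) (a::nat \<Rightarrow> real) b.
        (\<forall>k<n. a k \<le> b k \<and> {a k..b k} \<subseteq> I) \<and>
        (\<forall>j<n. \<forall>k<n. j \<noteq> k \<longrightarrow> b j \<le> a k \<or> b k \<le> a j) \<and>
        (\<Sum>k<n. b k - a k) < \<delta>
        \<longrightarrow> (\<Sum>k<n. norm (g (b k) - g (a k))) < \<epsilon>)"

definition fX :: "(real^'p \<Rightarrow> real^'d \<Rightarrow> real) \<Rightarrow> real^'d^'n \<Rightarrow> real^'p \<Rightarrow> real^'n" where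
  "fX f X \<theta> = (\<chi> i. f \<theta> (X $ i))"

definition risk :: "(real^'p \<Rightarrow> real^'d \<Rightarrow> real) \<Rightarrow> real^'d^'n \<Rightarrow> real^'n \<Rightarrow> real^'p \<Rightarrow> real" where
  "risk f X Y \<theta> = (norm (fX f X \<theta> - Y))\<^sup>2"

text \<open>Transpose of the row-vector gradient 2 (f_theta(X) - Y)^T Jacobian.\<close>
definition risk_grad :: "(real^'p \<Rightarrow> real^'d \<Rightarrow> real) \<Rightarrow> real^'d^'n \<Rightarrow> real^'n \<Rightarrow> real^'p \<Rightarrow> real^'p" where
  "risk_grad f X Y \<theta> = 2 *\<^sub>R (transpose (jacobian (fX f X) (at \<theta>)) *v (fX f X \<theta> - Y))"

definition sel_lambda :: "(real^'p \<Rightarrow> real^'d \<Rightarrow> real) \<Rightarrow> real^'d^'n \<Rightarrow> real^'n \<Rightarrow> real^'p \<Rightarrow> real \<Rightarrow> real^'p \<Rightarrow> real" where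
  "sel_lambda f X Y \<theta>0 lam \<theta> = (if risk_grad f X Y \<theta> \<bullet> (\<theta> - \<theta>0) \<ge> 0 then lam else 0)"

end

theory Submission
  imports Defs
begin

lemma tdiv_K:
  assumes "D tagged_division_of {a..b::real}" "(x,K) \<in> D"
  obtains u v where "K = {u..v}" "u \<le> v" "x \<in> {u..v}" "{u..v} \<subseteq> {a..b}"
proof -
  obtain u v where K: "K = cbox u v" using tagged_division_ofD(4)[OF assms] by blast
  have xK: "x \<in> K" using tagged_division_ofD(2)[OF assms] .
  have sub: "K \<subseteq> {a..b}" using tagged_division_ofD(3)[OF assms] .
  from xK K have "u \<le> v" by auto
  then show ?thesis using that K xK sub by auto
qed

lemma disjoint_intervals:
  fixes u v u' v' :: real
  assumes "u < v" "u' < v'" "{u<..<v} \<inter> {u'<..<v'} = {}"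
  shows "v \<le> u' \<or> v' \<le> u"
proof (rule ccontr)
  assume "\<not> (v \<le> u' \<or> v' \<le> u)"
  then have "(max u u' + min v v')/2 \<in> {u<..<v} \<inter> {u'<..<v'}" using assms
    by (auto simp: max_def min_def split: if_splits)
  then show False using assms by blast
qed

lemma ac_division_sum:
  fixes \<theta> :: "real \<Rightarrow> 'a::real_normed_vector"
  assumes P: "\<forall>(n::nat) (a'::nat \<Rightarrow> real) b'.
        (\<forall>k<n. a' k \<le> b' k \<and> {a' k..b' k} \<subseteq> {a..b}) \<and>
        (\<forall>j<n. \<forall>k<n. j \<noteq> k \<longrightarrow> b' j \<le> a' k \<or> b' k \<le> a' j) \<and>
        (\<Sum>k<n. b' k - a' k) < \<delta>
        \<longrightarrow> (\<Sum>k<n. norm (\<theta> (b' k) - \<theta> (a' k))) < e"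
  and D: "D tagged_division_of {a..b}" and S: "S \<subseteq> D"
  and small: "(\<Sum>(x,K)\<in>S. Henstock_Kurzweil_Integration.content K) < \<delta>"
  shows "(\<Sum>(x,K)\<in>S. norm (\<theta> (Sup K) - \<theta> (Inf K))) < e"
proof -
  have finD: "finite D" using D by blast
  then have finS: "finite S" using S finite_subset by blast
  define S' where "S' = {p\<in>S. Henstock_Kurzweil_Integration.content (snd p) \<noteq> 0}"
  have finS': "finite S'" using finS S'_def by auto
  have form: "\<exists>u v. K = {u..v} \<and> u \<le> v \<and> {u..v} \<subseteq> {a..b}" if "(x,K) \<in> S" for x K
    using tdiv_K[OF D, of x K] that S by blast
  have e1: "(\<Sum>(x,K)\<in>S. norm (\<theta> (Sup K) - \<theta> (Inf K))) = (\<Sum>(x,K)\<in>S'. norm (\<theta> (Sup K) - \<theta> (Inf K)))"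
  proof (rule sum.mono_neutral_right[OF finS])
    show "S' \<subseteq> S" unfolding S'_def by auto
    show "\<forall>i\<in>S - S'. (case i of (x, K) \<Rightarrow> norm (\<theta> (Sup K) - \<theta> (Inf K))) = 0"
    proof
      fix i assume i: "i \<in> S - S'"
      obtain x K where iK: "i = (x,K)" by fastforce
      obtain u v where K: "K = {u..v}" "u \<le> v" using form[of x K] i iK by blast
      have "Henstock_Kurzweil_Integration.content K = 0" using i iK S'_def by auto
      then have "u = v" using K by simp
      then show "(case i of (x, K) \<Rightarrow> norm (\<theta> (Sup K) - \<theta> (Inf K))) = 0" using iK K by simp
    qed
  qed
  have e2: "(\<Sum>(x,K)\<in>S'. Henstock_Kurzweil_Integration.content K) \<le> (\<Sum>(x,K)\<in>S. Henstock_Kurzweil_Integration.content K)"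
    by (rule sum_mono2[OF finS]) (auto simp: S'_def)
  obtain h where h: "bij_betw h {0..<card S'} S'" using ex_bij_betw_nat_finite[OF finS'] by blast
  define n where "n = card S'"
  define a' where "a' k = Inf (snd (h k))" for k
  define b' where "b' k = Sup (snd (h k))" for k
  have hS: "h k \<in> S'" if "k < n" for k using h that n_def bij_betwE by fastforce
  have form': "\<exists>u v. snd (h k) = {u..v} \<and> u < v \<and> {u..v} \<subseteq> {a..b} \<and> a' k = u \<and> b' k = v" if "k < n" for k
  proof -
    obtain x K where hk: "h k = (x,K)" by fastforce
    have "(x,K) \<in> S" "Henstock_Kurzweil_Integration.content K \<noteq> 0" using hS[OF that] hk S'_def by auto
    then obtain u v where "K = {u..v}" "u \<le> v" "{u..v} \<subseteq> {a..b}" using form by blast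
    moreover have "u \<noteq> v" using \<open>Henstock_Kurzweil_Integration.content K \<noteq> 0\<close> \<open>K = {u..v}\<close> by auto
    ultimately have "u < v" "K = {u..v}" "{u..v} \<subseteq> {a..b}" by auto
    moreover have "a' k = u" "b' k = v" using hk a'_def b'_def \<open>u < v\<close> \<open>K = {u..v}\<close> by simp_all
    ultimately show ?thesis using hk by (intro exI[of _ u] exI[of _ v]) simp
  qed
  have c1: "\<forall>k<n. a' k \<le> b' k \<and> {a' k..b' k} \<subseteq> {a..b}"
    using form' by (metis atLeastatMost_subset_iff less_eq_real_def)
  have c2: "\<forall>j<n. \<forall>k<n. j \<noteq> k \<longrightarrow> b' j \<le> a' k \<or> b' k \<le> a' j"
  proof (intro allI impI)
    fix j k assume jk: "j < n" "k < n" "j \<noteq> k"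
    have inj: "inj_on h {0..<n}" using h n_def by (simp add: bij_betw_def)
    have ne: "h j \<noteq> h k" using inj_on_contraD[OF inj jk(3)] jk by simp
    obtain x1 K1 where h1: "h j = (x1,K1)" by fastforce
    obtain x2 K2 where h2: "h k = (x2,K2)" by fastforce
    have "h j \<in> S" "h k \<in> S" using hS jk S'_def by auto
    then have m1: "(x1,K1) \<in> D" "(x2,K2) \<in> D" using h1 h2 S by auto
    have ne2: "(x1,K1) \<noteq> (x2,K2)" using ne h1 h2 by simp
    have int: "interior K1 \<inter> interior K2 = {}"
      using tagged_division_ofD(5)[OF D m1 ne2] .
    obtain u1 v1 where A1: "K1 = {u1..v1}" "u1 < v1" "a' j = u1" "b' j = v1" using form'[OF jk(1)] h1 by auto
    obtain u2 v2 where A2: "K2 = {u2..v2}" "u2 < v2" "a' k = u2" "b' k = v2" using form'[OF jk(2)] h2 by auto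
    have "{u1<..<v1} \<inter> {u2<..<v2} = {}" using int A1(1) A2(1) by simp
    from disjoint_intervals[OF A1(2) A2(2) this] show "b' j \<le> a' k \<or> b' k \<le> a' j" using A1 A2 by simp
  qed
  have sumeq: "(\<Sum>k<n. G (h k)) = (\<Sum>p\<in>S'. G p)" for G :: "real \<times> real set \<Rightarrow> real"
    using sum.reindex_bij_betw[OF h, of G] n_def by (simp add: atLeast0LessThan)
  have c3: "(\<Sum>k<n. b' k - a' k) < \<delta>"
  proof -
    have "(\<Sum>k<n. b' k - a' k) = (\<Sum>k<n. (\<lambda>(x,K). Henstock_Kurzweil_Integration.content K) (h k))"
    proof (rule sum.cong[OF refl])
      fix k assume "k \<in> {..<n}"
      then obtain u v where "snd (h k) = {u..v}" "u < v" "a' k = u" "b' k = v" using form' by blast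
      then show "b' k - a' k = (\<lambda>(x,K). Henstock_Kurzweil_Integration.content K) (h k)" by (cases "h k") auto
    qed
    also have "\<dots> = (\<Sum>(x,K)\<in>S'. Henstock_Kurzweil_Integration.content K)" by (rule sumeq)
    finally show ?thesis using e2 small by linarith
  qed
  have "(\<Sum>k<n. norm (\<theta> (b' k) - \<theta> (a' k))) < e" using P c1 c2 c3 by blast
  moreover have "(\<Sum>k<n. norm (\<theta> (b' k) - \<theta> (a' k))) = (\<Sum>(x,K)\<in>S'. norm (\<theta> (Sup K) - \<theta> (Inf K)))"
  proof -
    have "(\<Sum>k<n. norm (\<theta> (b' k) - \<theta> (a' k))) = (\<Sum>k<n. (\<lambda>(x,K). norm (\<theta> (Sup K) - \<theta> (Inf K))) (h k))"
      by (rule sum.cong[OF refl]) (auto simp: a'_def b'_def split: prod.split)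
    also have "\<dots> = (\<Sum>(x,K)\<in>S'. norm (\<theta> (Sup K) - \<theta> (Inf K)))" by (rule sumeq)
    finally show ?thesis .
  qed
  ultimately show ?thesis using e1 by simp
qed

lemma GGL:
  fixes F :: "real \<Rightarrow> real" and \<theta> :: "real \<Rightarrow> 'a::real_normed_vector"
  assumes ab: "a \<le> b" and ac: "abs_continuous_on {a..b} \<theta>" and C: "C \<ge> 0"
  and lipF: "\<forall>u\<in>{a..b}. \<forall>v\<in>{a..b}. \<bar>F v - F u\<bar> \<le> C * (norm (\<theta> v - \<theta> u) + \<bar>v - u\<bar>)"
  and N: "negligible N"
  and loc: "\<forall>x\<in>{a..b} - N. \<forall>e>0. \<exists>d>0. \<forall>y\<in>{a..b}.
              (x \<le> y \<and> y < x + d \<longrightarrow> F y - F x \<le> e * (y - x)) \<and>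
              (x - d < y \<and> y \<le> x \<longrightarrow> F x - F y \<le> e * (x - y))"
  shows "F b \<le> F a"
proof -
  have key: "F b - F a \<le> e * (b - a) + C * (2 * e)" if e: "e > 0" for e
  proof -
    obtain \<delta> where \<delta>: "\<delta> > 0" and P: "\<forall>(n::nat) (a'::nat \<Rightarrow> real) b'.
        (\<forall>k<n. a' k \<le> b' k \<and> {a' k..b' k} \<subseteq> {a..b}) \<and>
        (\<forall>j<n. \<forall>k<n. j \<noteq> k \<longrightarrow> b' j \<le> a' k \<or> b' k \<le> a' j) \<and>
        (\<Sum>k<n. b' k - a' k) < \<delta>
        \<longrightarrow> (\<Sum>k<n. norm (\<theta> (b' k) - \<theta> (a' k))) < e"
    proof -
      have "\<exists>\<delta>>0. \<forall>(n::nat) (a'::nat \<Rightarrow> real) b'.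
        (\<forall>k<n. a' k \<le> b' k \<and> {a' k..b' k} \<subseteq> {a..b}) \<and>
        (\<forall>j<n. \<forall>k<n. j \<noteq> k \<longrightarrow> b' j \<le> a' k \<or> b' k \<le> a' j) \<and>
        (\<Sum>k<n. b' k - a' k) < \<delta>
        \<longrightarrow> (\<Sum>k<n. norm (\<theta> (b' k) - \<theta> (a' k))) < e"
        using mp[OF spec[OF ac[unfolded abs_continuous_on_def], of e] e] .
      then show ?thesis using that by (elim exE conjE) 
    qed
    define \<delta>' where "\<delta>' = min \<delta> e"
    have \<delta>'pos: "\<delta>' > 0" using \<delta> e \<delta>'_def by simp
    have "(indicat_real N has_integral 0) (cbox a b)" using N[unfolded negligible] by blast
    from has_integral[THEN iffD1, rule_format, OF this \<delta>'pos]
    obtain \<gamma>0 where g0: "gauge \<gamma>0" and g0P: "\<forall>\<D>. \<D> tagged_division_of (cbox a b) \<and> \<gamma>0 fine \<D> \<longrightarrow>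
         norm ((\<Sum>(x,k)\<in>\<D>. Henstock_Kurzweil_Integration.content k *\<^sub>R indicat_real N x) - 0) < \<delta>'"
      by (elim exE conjE)
    have "\<forall>x. \<exists>d. d > 0 \<and> (x \<in> {a..b} - N \<longrightarrow> (\<forall>y\<in>{a..b}.
              (x \<le> y \<and> y < x + d \<longrightarrow> F y - F x \<le> e * (y - x)) \<and>
              (x - d < y \<and> y \<le> x \<longrightarrow> F x - F y \<le> e * (x - y))))"
    proof
      fix x show "\<exists>d. d > 0 \<and> (x \<in> {a..b} - N \<longrightarrow> (\<forall>y\<in>{a..b}.
              (x \<le> y \<and> y < x + d \<longrightarrow> F y - F x \<le> e * (y - x)) \<and>
              (x - d < y \<and> y \<le> x \<longrightarrow> F x - F y \<le> e * (x - y))))"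
      proof (cases "x \<in> {a..b} - N")
        case True then show ?thesis using loc e by blast
      next
        case False then show ?thesis by (intro exI[of _ 1]) auto
      qed
    qed
    from choice[OF this] obtain dd where dd: "\<And>x. dd x > 0"
      and ddP: "\<And>x. x \<in> {a..b} - N \<Longrightarrow> (\<forall>y\<in>{a..b}.
              (x \<le> y \<and> y < x + dd x \<longrightarrow> F y - F x \<le> e * (y - x)) \<and>
              (x - dd x < y \<and> y \<le> x \<longrightarrow> F x - F y \<le> e * (x - y)))"
      by blast
    define \<gamma> where "\<gamma> x = \<gamma>0 x \<inter> ball x (dd x)" for x
    have "gauge \<gamma>" unfolding \<gamma>_def by (rule gauge_Int[OF g0 gauge_ball_dependent]) (use dd in auto)
    then obtain \<D> where D: "\<D> tagged_division_of cbox a b" "\<gamma> fine \<D>" using fine_division_exists by blast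
    have Dab: "\<D> tagged_division_of {a..b}" using D by simp
    have f0: "\<gamma>0 fine \<D>" and f1: "(\<lambda>x. ball x (dd x)) fine \<D>" using D(2) unfolding \<gamma>_def fine_Int by auto
    have finD: "finite \<D>" using Dab by blast
    define DN where "DN = {p\<in>\<D>. fst p \<in> N}"
    have DNsub: "DN \<subseteq> \<D>" unfolding DN_def by auto
    have "(\<Sum>(x,k)\<in>\<D>. Henstock_Kurzweil_Integration.content k *\<^sub>R indicat_real N x) < \<delta>'"
      using g0P D(1) f0 by (smt (verit, best) real_norm_def)
    moreover have "(\<Sum>(x,k)\<in>\<D>. Henstock_Kurzweil_Integration.content k *\<^sub>R indicat_real N x)
        = (\<Sum>(x,K)\<in>DN. Henstock_Kurzweil_Integration.content K)"
    proof -
      have "(\<Sum>(x,K)\<in>DN. Henstock_Kurzweil_Integration.content K) =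
         (\<Sum>p\<in>\<D>. if fst p \<in> N then Henstock_Kurzweil_Integration.content (snd p) else 0)"
        unfolding DN_def using sum.inter_filter[OF finD, of "\<lambda>p. Henstock_Kurzweil_Integration.content (snd p)" "\<lambda>p. fst p \<in> N"]
        by (simp add: case_prod_beta)
      also have "\<dots> = (\<Sum>(x,k)\<in>\<D>. Henstock_Kurzweil_Integration.content k *\<^sub>R indicat_real N x)"
        by (rule sum.cong) (auto simp: indicator_def)
      finally show ?thesis by simp
    qed
    ultimately have sumDN: "(\<Sum>(x,K)\<in>DN. Henstock_Kurzweil_Integration.content K) < \<delta>'" by simp
    have AC1: "(\<Sum>(x,K)\<in>DN. norm (\<theta> (Sup K) - \<theta> (Inf K))) < e"
      using ac_division_sum[OF P Dab DNsub] sumDN \<delta>'_def by simp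
    have "F b - F a = (\<Sum>(x,K)\<in>\<D>. F (Sup K) - F (Inf K))" using additive_tagged_division_1[OF ab Dab, of F] by simp
    also have "\<dots> = (\<Sum>(x,K)\<in>\<D> - DN. F (Sup K) - F (Inf K)) + (\<Sum>(x,K)\<in>DN. F (Sup K) - F (Inf K))"
      by (rule sum.subset_diff[OF DNsub finD])
    also have "\<dots> \<le> e * (b - a) + C * (2 * e)"
    proof (rule add_mono)
      have "(\<Sum>(x,K)\<in>\<D> - DN. F (Sup K) - F (Inf K)) \<le> (\<Sum>(x,K)\<in>\<D> - DN. e * Henstock_Kurzweil_Integration.content K)"
      proof (rule sum_mono)
        fix p assume p: "p \<in> \<D> - DN"
        obtain x K where pK: "p = (x,K)" by fastforce
        have xK: "(x,K) \<in> \<D>" "x \<notin> N" using p pK DN_def by auto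
        obtain u v where K: "K = {u..v}" "u \<le> v" "x \<in> {u..v}" "{u..v} \<subseteq> {a..b}" using tdiv_K[OF Dab xK(1)] by blast
        have "K \<subseteq> ball x (dd x)" using f1 xK(1) by (auto simp: fine_def)
        moreover have "u \<in> K" "v \<in> K" using K(1,2) by auto
        ultimately have "u \<in> ball x (dd x)" "v \<in> ball x (dd x)" by (meson subsetD)+
        then have uv: "x - dd x < u" "v < x + dd x" by (auto simp: dist_real_def)
        have x: "x \<in> {a..b} - N" using K xK by auto
        have "F v - F x \<le> e * (v - x)" using ddP[OF x] uv K by auto
        moreover have "F x - F u \<le> e * (x - u)" using ddP[OF x] uv K by auto
        ultimately have "F v - F u \<le> e * (v - u)" by (simp add: algebra_simps)
        then show "(case p of (x,K) \<Rightarrow> F (Sup K) - F (Inf K)) \<le> (case p of (x,K) \<Rightarrow> e * Henstock_Kurzweil_Integration.content K)"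
          using pK K by simp
      qed
      also have "\<dots> \<le> (\<Sum>(x,K)\<in>\<D>. e * Henstock_Kurzweil_Integration.content K)"
        by (rule sum_mono2[OF finD]) (use e in auto)
      also have "\<dots> = e * (b - a)"
        using additive_content_tagged_division[OF D(1)] ab by (simp add: sum_distrib_left[symmetric] case_prod_beta)
      finally show "(\<Sum>(x,K)\<in>\<D> - DN. F (Sup K) - F (Inf K)) \<le> e * (b - a)" .
    next
      have "(\<Sum>(x,K)\<in>DN. F (Sup K) - F (Inf K)) \<le> (\<Sum>(x,K)\<in>DN. C * (norm (\<theta> (Sup K) - \<theta> (Inf K)) + Henstock_Kurzweil_Integration.content K))"
      proof (rule sum_mono)
        fix p assume p: "p \<in> DN"
        obtain x K where pK: "p = (x,K)" by fastforce
        have xK: "(x,K) \<in> \<D>" using p pK DN_def by auto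
        obtain u v where K: "K = {u..v}" "u \<le> v" "x \<in> {u..v}" "{u..v} \<subseteq> {a..b}" using tdiv_K[OF Dab xK(1)] by blast
        have "u \<in> {a..b}" "v \<in> {a..b}" using K by auto
        then have "\<bar>F v - F u\<bar> \<le> C * (norm (\<theta> v - \<theta> u) + \<bar>v - u\<bar>)" using lipF by blast
        then show "(case p of (x,K) \<Rightarrow> F (Sup K) - F (Inf K)) \<le> (case p of (x,K) \<Rightarrow> C * (norm (\<theta> (Sup K) - \<theta> (Inf K)) + Henstock_Kurzweil_Integration.content K))"
          using pK K by simp
      qed
      also have "\<dots> = C * ((\<Sum>(x,K)\<in>DN. norm (\<theta> (Sup K) - \<theta> (Inf K))) + (\<Sum>(x,K)\<in>DN. Henstock_Kurzweil_Integration.content K))"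
        by (simp add: sum_distrib_left[symmetric] sum.distrib case_prod_beta)
      also have "\<dots> \<le> C * (2 * e)"
        using AC1 sumDN \<delta>'_def C by (intro mult_left_mono) auto
      finally show "(\<Sum>(x,K)\<in>DN. F (Sup K) - F (Inf K)) \<le> C * (2 * e)" .
    qed
    finally show ?thesis .
  qed
  show ?thesis
  proof (rule ccontr)
    assume "\<not> F b \<le> F a"
    define D where "D = F b - F a"
    have Dp: "D > 0" using \<open>\<not> F b \<le> F a\<close> D_def by simp
    define e where "e = D / (2 * (b - a + 2 * C + 1))"
    have den: "2 * (b - a + 2 * C + 1) > 0" using ab C by simp
    have ep: "e > 0" using Dp den e_def by simp
    have "D \<le> e * (b - a + 2 * C)" using key[OF ep] D_def by (simp add: algebra_simps)
    also have "\<dots> < e * (2 * (b - a + 2 * C + 1))" using ep ab C by (intro mult_strict_left_mono) auto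
    also have "\<dots> = D" using den e_def by simp
    finally show False by simp
  qed
qed

lemma ac_imp_cont:
  fixes \<theta> :: "real \<Rightarrow> 'a::real_normed_vector"
  assumes "abs_continuous_on {a..b} \<theta>"
  shows "continuous_on {a..b} \<theta>"
  unfolding continuous_on_iff
proof (intro ballI allI impI)
  fix x e assume x: "x \<in> {a..b}" and e: "(e::real) > 0"
  obtain \<delta> where \<delta>: "\<delta> > 0" and P: "\<forall>(n::nat) (a'::nat \<Rightarrow> real) b'.
        (\<forall>k<n. a' k \<le> b' k \<and> {a' k..b' k} \<subseteq> {a..b}) \<and>
        (\<forall>j<n. \<forall>k<n. j \<noteq> k \<longrightarrow> b' j \<le> a' k \<or> b' k \<le> a' j) \<and>
        (\<Sum>k<n. b' k - a' k) < \<delta>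
        \<longrightarrow> (\<Sum>k<n. norm (\<theta> (b' k) - \<theta> (a' k))) < e"
    using mp[OF spec[OF assms[unfolded abs_continuous_on_def], of e] e] by (elim exE conjE)
  show "\<exists>d>0. \<forall>x'\<in>{a..b}. dist x' x < d \<longrightarrow> dist (\<theta> x') (\<theta> x) < e"
  proof (intro exI[of _ \<delta>] conjI ballI impI)
    fix y assume y: "y \<in> {a..b}" and d: "dist y x < \<delta>"
    define u where "u = min x y"
    define v where "v = max x y"
    have "(\<Sum>k<(1::nat). norm (\<theta> ((\<lambda>_. v) k) - \<theta> ((\<lambda>_. u) k))) < e"
      apply (rule P[rule_format])
      using x y d u_def v_def by (auto simp: dist_real_def)
    then have "norm (\<theta> v - \<theta> u) < e" by simp
    then show "dist (\<theta> y) (\<theta> x) < e" using u_def v_def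
      by (cases "x \<le> y") (auto simp: dist_norm norm_minus_commute)
  qed (use \<delta> in auto)
qed

lemma deriv_loc:
  fixes F :: "real \<Rightarrow> real"
  assumes "(F has_derivative (\<lambda>h. D * h)) (at x)" "D \<le> 0" "e > 0"
  shows "\<exists>d>0. \<forall>y. (x \<le> y \<and> y < x + d \<longrightarrow> F y - F x \<le> e * (y - x)) \<and>
                     (x - d < y \<and> y \<le> x \<longrightarrow> F x - F y \<le> e * (x - y))"
proof -
  obtain d where d: "d > 0" and P: "\<forall>y. norm (y - x) < d \<longrightarrow> norm (F y - F x - D * (y - x)) \<le> e * norm (y - x)"
    using assms(1)[unfolded has_derivative_at_alt] assms(3) by blast
  show ?thesis
  proof (intro exI[of _ d] conjI allI impI d)
    fix y assume y: "x \<le> y \<and> y < x + d"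
    then have "\<bar>F y - F x - D * (y - x)\<bar> \<le> e * \<bar>y - x\<bar>" using P[rule_format, of y] by auto
    then have "\<bar>F y - F x - D * (y - x)\<bar> \<le> e * (y - x)" using y by simp
    moreover have "D * (y - x) \<le> 0" using y assms(2) by (simp add: mult_nonpos_nonneg)
    ultimately show "F y - F x \<le> e * (y - x)" using y by auto
  next
    fix y assume y: "x - d < y \<and> y \<le> x"
    then have "\<bar>F y - F x - D * (y - x)\<bar> \<le> e * \<bar>y - x\<bar>" using P[rule_format, of y] by auto
    then have "\<bar>F y - F x - D * (y - x)\<bar> \<le> e * (x - y)" using y by simp
    moreover have "D * (x - y) \<le> 0" using y assms(2) by (simp add: mult_nonpos_nonneg)
    ultimately show "F x - F y \<le> e * (x - y)" using y by (auto simp: algebra_simps)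
  qed
qed

lemma eps_le:
  fixes a b K :: real
  assumes "\<And>\<delta>. 0 < \<delta> \<Longrightarrow> \<delta> \<le> 1 \<Longrightarrow> a \<le> b + \<delta> * K" "K \<ge> 0"
  shows "a \<le> b"
proof (rule ccontr)
  assume "\<not> a \<le> b"
  define \<delta> where "\<delta> = min 1 ((a - b) / (2 * (K + 1)))"
  have dp: "\<delta> > 0" "\<delta> \<le> 1" using \<open>\<not> a \<le> b\<close> assms(2) \<delta>_def by auto
  have "\<delta> * K \<le> ((a - b) / (2 * (K + 1))) * K" using assms(2) \<delta>_def by (intro mult_right_mono) auto
  also have "\<dots> < a - b"
  proof -
    have "((a - b) / (2 * (K + 1))) * K = (a - b) * (K / (2 * (K + 1)))" by simp
    also have "\<dots> < (a - b) * 1"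
      using \<open>\<not> a \<le> b\<close> assms(2) by (intro mult_strict_left_mono) (auto simp: divide_simps)
    finally show ?thesis by simp
  qed
  finally show False using assms(1)[OF dp] by simp
qed

lemma exp_diff_le: "exp (a::real) - exp b \<le> exp a * (a - b)"
proof -
  have "1 + (b - a) \<le> exp (b - a)" by (rule exp_ge_add_one_self)
  then have "exp a * (1 + (b - a)) \<le> exp a * exp (b - a)" by (intro mult_left_mono) auto
  also have "exp a * exp (b - a) = exp b" by (simp add: exp_diff)
  finally show ?thesis by (simp add: algebra_simps)
qed

lemma deriv_lip_bound:
  fixes \<Phi> :: "'a::real_inner \<Rightarrow> 'b::real_normed_vector"
  assumes lip: "L-lipschitz_on (cball c r) \<Phi>" and r: "r > 0" and th: "\<theta> \<in> cball c r"
    and der: "(\<Phi> has_derivative D) (at \<theta>)"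
  shows "norm (D h) \<le> L * norm h"
proof -
  have bl: "bounded_linear D" using der has_derivative_bounded_linear by blast
  interpret D: bounded_linear D by (rule bl)
  have L0: "L \<ge> 0" using lip lipschitz_on_nonneg by blast
  have stepA: "norm (D (y - \<theta>)) \<le> L * norm (y - \<theta>)" if y: "y \<in> cball c r" for y
  proof (cases "y = \<theta>")
    case True then show ?thesis by (simp add: D.zero)
  next
    case False
    define w where "w = y - \<theta>"
    have wpos: "norm w > 0" using False w_def by simp
    show ?thesis unfolding w_def[symmetric]
    proof (rule eps_le[where K = "norm w"])
      fix e :: real assume e: "0 < e" "e \<le> 1"
      obtain d where d: "d > 0" and P: "\<forall>z. norm (z - \<theta>) < d \<longrightarrow> norm (\<Phi> z - \<Phi> \<theta> - D (z - \<theta>)) \<le> e * norm (z - \<theta>)"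
        using der[unfolded has_derivative_at_alt] e by blast
      define \<tau> where "\<tau> = min 1 (d / (2 * norm w))"
      have \<tau>: "\<tau> > 0" "\<tau> \<le> 1" using d wpos \<tau>_def by auto
      have "\<tau> \<le> d / (2 * norm w)" using \<tau>_def by simp
      then have \<tau>w: "\<tau> * norm w \<le> d / 2" using wpos by (simp add: field_simps)
      define z where "z = \<theta> + \<tau> *\<^sub>R w"
      have "z - c = (1 - \<tau>) *\<^sub>R (\<theta> - c) + \<tau> *\<^sub>R (y - c)" by (simp add: z_def w_def algebra_simps)
      then have "norm (z - c) \<le> (1 - \<tau>) * norm (\<theta> - c) + \<tau> * norm (y - c)"
        using \<tau> by (metis norm_triangle_ineq norm_scaleR abs_of_nonneg diff_ge_0_iff_ge less_imp_le order_trans add_mono order_refl)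
      also have "\<dots> \<le> (1 - \<tau>) * r + \<tau> * r"
        using th y \<tau> by (intro add_mono mult_left_mono) (auto simp: dist_norm norm_minus_commute)
      finally have zc: "z \<in> cball c r" by (simp add: dist_norm norm_minus_commute algebra_simps)
      have zn: "norm (z - \<theta>) = \<tau> * norm w" using \<tau> by (simp add: z_def)
      have Dz: "D (z - \<theta>) = \<tau> *\<^sub>R D w" by (simp add: z_def D.scaleR)
      have e1: "norm (\<Phi> z - \<Phi> \<theta> - \<tau> *\<^sub>R D w) \<le> e * (\<tau> * norm w)"
        using P[rule_format, of z] zn Dz \<tau>w d by simp
      have e2: "norm (\<Phi> z - \<Phi> \<theta>) \<le> L * (\<tau> * norm w)"
        using lipschitz_onD[OF lip zc th] zn by (simp add: dist_norm)
      have "\<tau> * norm (D w) = norm (\<tau> *\<^sub>R D w)" using \<tau> by simp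
      also have "\<dots> \<le> norm (\<Phi> z - \<Phi> \<theta>) + norm (\<Phi> z - \<Phi> \<theta> - \<tau> *\<^sub>R D w)"
        using norm_triangle_ineq4[of "\<Phi> z - \<Phi> \<theta>" "\<Phi> z - \<Phi> \<theta> - \<tau> *\<^sub>R D w"] by simp
      also have "\<dots> \<le> \<tau> * (L * norm w + e * norm w)" using e1 e2 by (simp add: algebra_simps)
      finally have "norm (D w) \<le> L * norm w + e * norm w" using \<tau> by simp
      then show "norm (D w) \<le> L * norm w + e * norm w" .
    qed simp
  qed
  have stepB: "norm (D h) \<le> L * norm h" if hs: "inner h (\<theta> - c) \<le> 0" for h
  proof (rule eps_le[where K = "(norm h + 1) / r * (L * r + norm (D (\<theta> - c)))"])
    fix \<delta> :: real assume \<delta>: "0 < \<delta>" "\<delta> \<le> 1"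
    define s where "s = r * \<delta> / (norm h + 1)"
    define \<epsilon> where "\<epsilon> = \<delta>^2"
    have hp: "norm h + 1 > 0" by (simp add: add_nonneg_pos)
    then have s: "s > 0" using r \<delta> s_def by (simp add: divide_pos_pos)
    have \<epsilon>: "0 < \<epsilon>" "\<epsilon> \<le> 1" using \<delta> \<epsilon>_def by (auto simp: power_le_one)
    define y where "y = c + (1 - \<epsilon>) *\<^sub>R (\<theta> - c) + s *\<^sub>R h"
    have tc: "norm (\<theta> - c) \<le> r" using th by (simp add: dist_norm norm_minus_commute)
    have sh: "s * norm h \<le> r * \<delta>"
    proof -
      have "s * norm h = r * \<delta> * (norm h / (norm h + 1))" by (simp add: s_def)
      also have "\<dots> \<le> r * \<delta> * 1" using r \<delta> hp by (intro mult_left_mono) (auto simp: divide_le_eq)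
      finally show ?thesis by simp
    qed
    have yc: "y \<in> cball c r"
    proof -
      have "(norm (y - c))^2 = (1-\<epsilon>)^2 * (norm (\<theta>-c))^2 + 2 * ((1 - \<epsilon>) * s) * inner h (\<theta> - c) + s^2 * (norm h)^2"
      proof -
        have e0: "y - c = (1-\<epsilon>) *\<^sub>R (\<theta> - c) + s *\<^sub>R h" by (simp add: y_def)
        have sq: "\<And>a b::'a. (norm (a + b))^2 = (norm a)^2 + 2 * inner a b + (norm b)^2"
          by (simp add: power2_norm_eq_inner inner_add_left inner_add_right inner_commute)
        show ?thesis unfolding e0 sq by (simp add: power_mult_distrib inner_commute[of "\<theta> - c" h] mult_ac)
      qed
      also have "\<dots> \<le> (1-\<epsilon>)^2 * r^2 + 0 + (r * \<delta>)^2"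
      proof (intro add_mono)
        show "(1-\<epsilon>)^2 * (norm (\<theta>-c))^2 \<le> (1-\<epsilon>)^2 * r^2"
          using tc by (intro mult_left_mono power_mono) auto
        show "2 * ((1 - \<epsilon>) * s) * inner h (\<theta> - c) \<le> 0"
          using hs \<epsilon> s by (intro mult_nonneg_nonpos) auto
        show "s^2 * (norm h)^2 \<le> (r * \<delta>)^2"
        proof -
          have "(s * norm h)^2 \<le> (r * \<delta>)^2" using sh s by (intro power_mono) auto
          then show ?thesis by (simp add: power_mult_distrib)
        qed
      qed
      also have "\<dots> = r^2 * ((1 - \<delta>^2)^2 + \<delta>^2)" by (simp add: \<epsilon>_def algebra_simps power2_eq_square)
      also have "\<dots> \<le> r^2 * 1"
      proof (intro mult_left_mono)
        have "\<delta>^2 * \<delta>^2 \<le> 1 * \<delta>^2" using \<delta> by (intro mult_right_mono) (auto simp: power_le_one)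
        then show "(1 - \<delta>^2)^2 + \<delta>^2 \<le> 1" by (simp add: algebra_simps power2_eq_square)
      qed simp
      finally have "(norm (y - c))^2 \<le> r^2" by simp
      then have "norm (y - c) \<le> r" using r by (simp add: power2_le_iff_abs_le)
      then show ?thesis by (simp add: dist_norm norm_minus_commute)
    qed
    have yt: "y - \<theta> = s *\<^sub>R h - \<epsilon> *\<^sub>R (\<theta> - c)" by (simp add: y_def algebra_simps)
    have "s * norm (D h) = norm (D (y - \<theta>) + \<epsilon> *\<^sub>R D (\<theta> - c))"
      using s by (simp add: yt D.diff D.scaleR)
    also have "\<dots> \<le> norm (D (y - \<theta>)) + \<epsilon> * norm (D (\<theta> - c))"
      using norm_triangle_ineq[of "D (y - \<theta>)" "\<epsilon> *\<^sub>R D (\<theta> - c)"] \<epsilon> by simp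
    also have "\<dots> \<le> L * norm (y - \<theta>) + \<epsilon> * norm (D (\<theta> - c))"
      using stepA[OF yc] by simp
    also have "\<dots> \<le> L * (s * norm h + \<epsilon> * r) + \<epsilon> * norm (D (\<theta> - c))"
    proof -
      have "norm (y - \<theta>) \<le> s * norm h + \<epsilon> * norm (\<theta> - c)"
        unfolding yt using norm_triangle_ineq4[of "s *\<^sub>R h" "\<epsilon> *\<^sub>R (\<theta> - c)"] s \<epsilon> by simp
      also have "\<dots> \<le> s * norm h + \<epsilon> * r" using tc \<epsilon> by (simp add: mult_left_mono)
      finally show ?thesis using L0 by (simp add: mult_left_mono)
    qed
    finally have "s * norm (D h) \<le> s * (L * norm h) + \<epsilon> * (L * r + norm (D (\<theta> - c)))"
      by (simp add: algebra_simps)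
    then have "norm (D h) \<le> L * norm h + (\<epsilon> / s) * (L * r + norm (D (\<theta> - c)))"
      using s by (simp add: field_simps)
    also have "\<epsilon> / s = \<delta> * ((norm h + 1) / r)"
      using r \<delta> by (simp add: \<epsilon>_def s_def field_simps power2_eq_square)
    finally show "norm (D h) \<le> L * norm h + \<delta> * ((norm h + 1) / r * (L * r + norm (D (\<theta> - c))))"
      by (simp add: algebra_simps)
  next
    show "0 \<le> (norm h + 1) / r * (L * r + norm (D (\<theta> - c)))" using r L0 by simp
  qed
  show ?thesis
  proof (cases "inner h (\<theta> - c) \<le> 0")
    case True then show ?thesis using stepB by blast
  next
    case False
    then have "inner (-h) (\<theta> - c) \<le> 0" by simp
    then have "norm (D (-h)) \<le> L * norm (-h)" using stepB by blast
    then show ?thesis by (simp add: D.neg)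
  qed
qed

lemma fX_deriv:
  fixes f :: "real^'p \<Rightarrow> real^'d \<Rightarrow> real" and X :: "real^'d^'n"
  assumes gg: "\<And>x v. ((\<lambda>v. f v x) has_derivative (\<lambda>h. gg x v \<bullet> h)) (at v)"
  shows "(fX f X has_derivative (\<lambda>h. \<chi> i. gg (X$i) \<theta> \<bullet> h)) (at \<theta>)"
proof -
  have "\<forall>i\<in>Basis. ((\<lambda>x. fX f X x \<bullet> i) has_derivative (\<lambda>h. (\<chi> i. gg (X$i) \<theta> \<bullet> h) \<bullet> i)) (at \<theta>)"
  proof
    fix i :: "real^'n" assume "i \<in> Basis"
    then obtain k where k: "i = axis k 1" by (auto simp: Basis_vec_def)
    show "((\<lambda>x. fX f X x \<bullet> i) has_derivative (\<lambda>h. (\<chi> i. gg (X$i) \<theta> \<bullet> h) \<bullet> i)) (at \<theta>)"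
      unfolding k by (simp add: inner_axis fX_def gg)
  qed
  then show ?thesis using has_derivative_componentwise_within[of "fX f X" _ \<theta> UNIV] by simp
qed

lemma jac_eq:
  fixes F :: "real^'p \<Rightarrow> real^'n"
  assumes "(F has_derivative D) (at \<theta>)"
  shows "jacobian F (at \<theta>) *v h = D h"
proof -
  have "F differentiable (at \<theta>)" using assms differentiableI by blast
  then have "(F has_derivative (\<lambda>h. jacobian F (at \<theta>) *v h)) (at \<theta>)" using jacobian_works by blast
  then have "(\<lambda>h. jacobian F (at \<theta>) *v h) = D" using assms has_derivative_unique by blast
  then show ?thesis by metis
qed

lemma risk_grad_inner:
  fixes f :: "real^'p \<Rightarrow> real^'d \<Rightarrow> real" and X :: "real^'d^'n"
  shows "risk_grad f X Y \<theta> \<bullet> h = 2 * ((fX f X \<theta> - Y) \<bullet> (jacobian (fX f X) (at \<theta>) *v h))"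
  unfolding risk_grad_def by (simp add: dot_lmul_matrix)

lemma risk_grad_comp:
  fixes f :: "real^'p \<Rightarrow> real^'d \<Rightarrow> real" and X :: "real^'d^'n"
  shows "risk_grad f X Y \<theta> = (\<chi> j. 2 * ((fX f X \<theta> - Y) \<bullet> (jacobian (fX f X) (at \<theta>) *v axis j 1)))"
proof -
  have "risk_grad f X Y \<theta> $ j = 2 * ((fX f X \<theta> - Y) \<bullet> (jacobian (fX f X) (at \<theta>) *v axis j 1))" for j
    using risk_grad_inner[of f X Y \<theta> "axis j 1"] by (simp add: inner_axis)
  then show ?thesis by (simp add: vec_eq_iff)
qed

lemma sqnorm_diff:
  fixes A B :: "'a::real_normed_vector"
  shows "\<bar>(norm A)^2 - (norm B)^2\<bar> \<le> norm (A - B) * (norm A + norm B)"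
proof -
  have "(norm A)^2 - (norm B)^2 = (norm A - norm B) * (norm A + norm B)"
    by (simp add: power2_eq_square algebra_simps)
  then have "\<bar>(norm A)^2 - (norm B)^2\<bar> = \<bar>norm A - norm B\<bar> * (norm A + norm B)"
    by (simp add: abs_mult)
  also have "\<dots> \<le> norm (A - B) * (norm A + norm B)"
    by (intro mult_right_mono norm_triangle_ineq3) auto
  finally show ?thesis .
qed

lemma fwd_step:
  fixes Ey Ex \<phi>y \<phi>x Iy Ix \<tau> lx G e1 e2 K1 :: real
  assumes "0 \<le> \<tau>" "Ey > 0" "\<phi>y \<le> (1 - \<tau>*lx)*\<phi>x + \<tau>*G + e1*\<tau>" "Ey - Ex \<le> Ey*lx*\<tau>"
    "Iy - Ix \<ge> Ex*\<tau>" "\<phi>x \<ge> 0" "G \<ge> 0" "Ey - Ex \<le> e2" "Ey \<le> K1" "e1 \<ge> 0"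
  shows "(Ey*\<phi>y - G*Iy) - (Ex*\<phi>x - G*Ix) \<le> \<tau>*(G*e2 + e1*K1)"
proof -
  have f1: "Ey*\<phi>y \<le> Ey*((1 - \<tau>*lx)*\<phi>x + \<tau>*G + e1*\<tau>)" using assms by (intro mult_left_mono) auto
  have f2: "(Ey - Ex)*\<phi>x \<le> (Ey*lx*\<tau>)*\<phi>x" using assms by (intro mult_right_mono) auto
  have f3: "G*(Ex*\<tau>) \<le> G*(Iy - Ix)" using assms by (intro mult_left_mono) auto
  have f4: "\<tau>*(G*(Ey-Ex)) \<le> \<tau>*(G*e2)" using assms by (intro mult_left_mono) auto
  have f5: "\<tau>*(e1*Ey) \<le> \<tau>*(e1*K1)" using assms by (intro mult_left_mono) auto
  show ?thesis using f1 f2 f3 f4 f5 by (simp add: algebra_simps)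
qed

lemma bwd_step:
  fixes Ey Ex \<phi>y \<phi>x Iy Ix \<tau> lx G e1 e2 K1 M :: real
  assumes "0 \<le> \<tau>" "Ey > 0" "(1 + \<tau>*lx)*\<phi>x \<le> \<phi>y + \<tau>*G + e1*\<tau>" "Ex - Ey \<le> Ex*lx*\<tau>"
    "Ix - Iy \<ge> Ey*\<tau>" "\<phi>x \<ge> 0" "G \<ge> 0" "Ex - Ey \<le> e2" "Ey \<le> K1" "e1 \<ge> 0"
    "0 \<le> lx*\<phi>x" "lx*\<phi>x \<le> M" "e2 \<ge> 0"
  shows "(Ex*\<phi>x - G*Ix) - (Ey*\<phi>y - G*Iy) \<le> \<tau>*(e1*K1 + M*e2)"
proof -
  have f1: "Ey*(\<phi>x - \<phi>y) \<le> Ey*(\<tau>*G + e1*\<tau> - \<tau>*lx*\<phi>x)" using assms by (intro mult_left_mono) (auto simp: algebra_simps)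
  have f2: "(Ex - Ey)*\<phi>x \<le> (Ex*lx*\<tau>)*\<phi>x" using assms by (intro mult_right_mono) auto
  have f3: "G*(Ey*\<tau>) \<le> G*(Ix - Iy)" using assms by (intro mult_left_mono) auto
  have f4: "(lx*\<phi>x)*(Ex-Ey) \<le> M*e2"
  proof -
    have "(lx*\<phi>x)*(Ex-Ey) \<le> (lx*\<phi>x)*e2" using assms by (intro mult_left_mono) auto
    also have "\<dots> \<le> M*e2" using assms by (intro mult_right_mono) auto
    finally show ?thesis .
  qed
  have f4': "\<tau>*((lx*\<phi>x)*(Ex-Ey)) \<le> \<tau>*(M*e2)" using f4 assms by (intro mult_left_mono) auto
  have f5: "\<tau>*(e1*Ey) \<le> \<tau>*(e1*K1)" using assms by (intro mult_left_mono) auto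
  show ?thesis using f1 f2 f3 f4' f5 by (simp add: algebra_simps)
qed
lemma tri3a:
  fixes a b c :: "'a::real_normed_vector"
  shows "norm (a - b + c) \<le> norm a + norm b + norm c"
  using norm_triangle_ineq[of "a - b" c] norm_triangle_ineq4[of a b] by linarith

lemma tri3b:
  fixes a b c :: "'a::real_normed_vector"
  shows "norm (a - b - c) \<le> norm a + norm b + norm c"
  using norm_triangle_ineq4[of "a - b" c] norm_triangle_ineq4[of a b] by linarith

theorem theorem2:
  fixes f :: "real^'p \<Rightarrow> real^'d \<Rightarrow> real"
    and X :: "real^'d^'n" and Y :: "real^'n"
    and \<theta>0 :: "real^'p" and \<theta> :: "real \<Rightarrow> real^'p"
    and lam r L t :: real
  assumes C1: "\<forall>x. \<exists>g. continuous_on UNIV g \<and>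
                  (\<forall>v. ((\<lambda>v. f v x) has_derivative (\<lambda>h. g v \<bullet> h)) (at v))"
    and lam_pos: "lam > 0" and r_pos: "r > 0"
    and lip: "L-lipschitz_on (cball \<theta>0 r) (fX f X)"
    and ac: "\<forall>T\<ge>0. abs_continuous_on {0..T} \<theta>"
    and init: "\<theta> 0 = \<theta>0"
    and flow: "AE s in lborel. s \<ge> 0 \<longrightarrow>
                 (\<theta> has_vector_derivative
                    (- risk_grad f X Y (\<theta> s) - sel_lambda f X Y \<theta>0 lam (\<theta> s) *\<^sub>R (\<theta> s - \<theta>0))) (at s)"
    and t_nonneg: "t \<ge> 0"
    and in_ball: "\<forall>s\<in>{0..t}. \<theta> s \<in> cball \<theta>0 r"
  shows "let \<Lambda> = (\<lambda>u. integral {0..u} (\<lambda>s. sel_lambda f X Y \<theta>0 lam (\<theta> s))) in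
           norm (\<theta> t - \<theta>0) \<le> 2 * L * norm (fX f X \<theta>0 - Y) * integral {0..t} (\<lambda>s. exp (- (\<Lambda> t - \<Lambda> s)))
         \<and> ((\<forall>s\<in>{0..t}. sel_lambda f X Y \<theta>0 lam (\<theta> s) = lam) \<longrightarrow>
              norm (\<theta> t - \<theta>0) \<le> 2 * L * norm (fX f X \<theta>0 - Y) * ((1 - exp (- lam * t)) / lam))"
proof -
  from C1 have "\<forall>x. \<exists>g. continuous_on UNIV g \<and> (\<forall>v. ((\<lambda>v. f v x) has_derivative (\<lambda>h. g v \<bullet> h)) (at v))" .
  from choice[OF this] obtain gg where gg: "\<And>x. continuous_on UNIV (gg x)"
    and ggd: "\<And>x v. ((\<lambda>v. f v x) has_derivative (\<lambda>h. gg x v \<bullet> h)) (at v)" by blast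
  define \<Phi> where "\<Phi> = fX f X"
  define Dm where "Dm z h = (\<chi> i. gg (X$i) z \<bullet> h)" for z h
  have \<Phi>der: "\<And>z. (\<Phi> has_derivative Dm z) (at z)"
    unfolding \<Phi>_def Dm_def using fX_deriv[where f=f and gg=gg and X=X, OF ggd] by blast
  have bl: "\<And>z. bounded_linear (Dm z)" using \<Phi>der has_derivative_bounded_linear by blast
  have \<Phi>cont: "continuous_on UNIV \<Phi>"
    using \<Phi>der by (intro has_derivative_continuous_on) (auto intro: has_derivative_at_withinI)
  define rg where "rg z = risk_grad f X Y z" for z
  have jac: "\<And>z h. jacobian \<Phi> (at z) *v h = Dm z h" using jac_eq[OF \<Phi>der] by blast
  have rg_inner: "\<And>z h. rg z \<bullet> h = 2 * ((\<Phi> z - Y) \<bullet> Dm z h)"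
    unfolding rg_def using risk_grad_inner[of f X Y] jac unfolding \<Phi>_def by simp
  have rg_cont: "continuous_on UNIV rg"
  proof -
    have "rg = (\<lambda>z. \<chi> j. 2 * ((\<Phi> z - Y) \<bullet> (\<chi> i. gg (X$i) z \<bullet> axis j 1)))"
      unfolding rg_def using risk_grad_comp[of f X Y] jac unfolding \<Phi>_def Dm_def by (simp add: fun_eq_iff)
    moreover have "continuous_on UNIV (\<lambda>z. \<chi> j. 2 * ((\<Phi> z - Y) \<bullet> (\<chi> i. gg (X$i) z \<bullet> axis j 1)))"
      by (intro continuous_intros \<Phi>cont gg)
    ultimately show ?thesis by simp
  qed
  have L0: "L \<ge> 0" using lip lipschitz_on_nonneg by blast
  have Dbound: "\<And>z h. z \<in> cball \<theta>0 r \<Longrightarrow> norm (Dm z h) \<le> L * norm h"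
    using deriv_lip_bound[OF lip[folded \<Phi>_def] r_pos _ \<Phi>der] by blast
  have rg_bound: "\<And>z. z \<in> cball \<theta>0 r \<Longrightarrow> norm (rg z) \<le> 2 * L * norm (\<Phi> z - Y)"
  proof -
    fix z assume z: "z \<in> cball \<theta>0 r"
    have "(norm (rg z))^2 = rg z \<bullet> rg z" by (simp add: power2_norm_eq_inner)
    also have "\<dots> = 2 * ((\<Phi> z - Y) \<bullet> Dm z (rg z))" by (rule rg_inner)
    also have "\<dots> \<le> 2 * (norm (\<Phi> z - Y) * norm (Dm z (rg z)))" by (simp add: norm_cauchy_schwarz)
    also have "\<dots> \<le> 2 * (norm (\<Phi> z - Y) * (L * norm (rg z)))"
      using Dbound[OF z] by (simp add: mult_left_mono)
    finally have "norm (rg z) * norm (rg z) \<le> (2 * L * norm (\<Phi> z - Y)) * norm (rg z)"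
      by (simp add: power2_eq_square algebra_simps)
    then show "norm (rg z) \<le> 2 * L * norm (\<Phi> z - Y)"
      by (cases "norm (rg z) = 0") (auto simp: L0)
  qed
  define sl where "sl s = sel_lambda f X Y \<theta>0 lam (\<theta> s)" for s
  have sl_eq: "\<And>s. sl s = (if rg (\<theta> s) \<bullet> (\<theta> s - \<theta>0) \<ge> 0 then lam else 0)"
    by (simp add: sl_def sel_lambda_def rg_def)
  define V where "V s = - rg (\<theta> s) - sl s *\<^sub>R (\<theta> s - \<theta>0)" for s
  obtain N where N: "negligible N" and Nder: "\<And>s. s \<ge> 0 \<Longrightarrow> s \<notin> N \<Longrightarrow> (\<theta> has_vector_derivative V s) (at s)"
  proof -
    from flow obtain N where N1: "{s \<in> space lborel. \<not> (s \<ge> 0 \<longrightarrow>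
                 (\<theta> has_vector_derivative
                    (- risk_grad f X Y (\<theta> s) - sel_lambda f X Y \<theta>0 lam (\<theta> s) *\<^sub>R (\<theta> s - \<theta>0))) (at s))} \<subseteq> N"
      and N2: "emeasure lborel N = 0" and N3: "N \<in> sets lborel"
      by (rule AE_E)
    have "N \<in> null_sets lborel" using N2 N3 by auto
    then have "N \<in> null_sets lebesgue" by (rule null_sets_completionI)
    then have "negligible N" by (simp add: negligible_iff_null_sets)
    moreover have "\<And>s. s \<ge> 0 \<Longrightarrow> s \<notin> N \<Longrightarrow> (\<theta> has_vector_derivative V s) (at s)"
      using N1 unfolding V_def rg_def sl_def by auto
    ultimately show ?thesis using that by blast
  qed
  have \<theta>cont: "continuous_on {0..t} \<theta>" using ac_imp_cont ac t_nonneg by blast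
  have ballt: "\<And>s. s \<in> {0..t} \<Longrightarrow> \<theta> s \<in> cball \<theta>0 r" using in_ball by blast
  define R0 where "R0 = norm (\<Phi> \<theta>0 - Y)"
  define M where "M = R0 + L * r"
  have \<Phi>M: "\<And>z. z \<in> cball \<theta>0 r \<Longrightarrow> norm (\<Phi> z - Y) \<le> M"
  proof -
    fix z assume z: "z \<in> cball \<theta>0 r"
    have "norm (\<Phi> z - \<Phi> \<theta>0) \<le> L * norm (z - \<theta>0)"
      using lipschitz_onD[OF lip[folded \<Phi>_def] z, of \<theta>0] r_pos by (simp add: dist_norm)
    also have "\<dots> \<le> L * r" using z L0 by (intro mult_left_mono) (auto simp: dist_norm norm_minus_commute)
    finally have "norm (\<Phi> z - \<Phi> \<theta>0) \<le> L * r" .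
    moreover have "norm (\<Phi> z - Y) \<le> norm (\<Phi> z - \<Phi> \<theta>0) + norm (\<Phi> \<theta>0 - Y)"
      by (metis norm_triangle_ineq diff_add_cancel add_diff_eq)
    ultimately show "norm (\<Phi> z - Y) \<le> M" unfolding M_def R0_def by linarith
  qed
  have R0nn: "R0 \<ge> 0" by (simp add: R0_def)
  have Mnn: "M \<ge> 0" using R0nn L0 r_pos by (simp add: M_def)
  have risk_mono: "\<And>s. s \<in> {0..t} \<Longrightarrow> norm (\<Phi> (\<theta> s) - Y) \<le> R0"
  proof -
    fix s assume s: "s \<in> {0..t}"
    define F where "F \<tau> = (norm (\<Phi> (\<theta> \<tau>) - Y))^2" for \<tau>
    have sub: "{0..s} \<subseteq> {0..t}" using s by auto
    have "F s \<le> F 0"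
    proof (rule GGL[where \<theta>=\<theta> and C="2*M*L" and N=N and F=F and a=0 and b=s])
      show "0 \<le> s" using s by auto
      show "abs_continuous_on {0..s} \<theta>" using ac s by auto
      show "2*M*L \<ge> 0" using Mnn L0 by simp
      show "\<forall>u\<in>{0..s}. \<forall>v\<in>{0..s}. \<bar>F v - F u\<bar> \<le> 2*M*L * (norm (\<theta> v - \<theta> u) + \<bar>v - u\<bar>)"
      proof (intro ballI)
        fix u v assume u: "u \<in> {0..s}" and v: "v \<in> {0..s}"
        have bu: "\<theta> u \<in> cball \<theta>0 r" "\<theta> v \<in> cball \<theta>0 r" using ballt sub u v by auto
        have "\<bar>F v - F u\<bar> \<le> norm ((\<Phi> (\<theta> v) - Y) - (\<Phi> (\<theta> u) - Y)) * (norm (\<Phi> (\<theta> v) - Y) + norm (\<Phi> (\<theta> u) - Y))"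
          unfolding F_def by (rule sqnorm_diff)
        also have "\<dots> \<le> (L * norm (\<theta> v - \<theta> u)) * (M + M)"
        proof (rule mult_mono)
          show "norm ((\<Phi> (\<theta> v) - Y) - (\<Phi> (\<theta> u) - Y)) \<le> L * norm (\<theta> v - \<theta> u)"
            using lipschitz_onD[OF lip[folded \<Phi>_def] bu(2) bu(1)] by (simp add: dist_norm)
          show "norm (\<Phi> (\<theta> v) - Y) + norm (\<Phi> (\<theta> u) - Y) \<le> M + M"
            using \<Phi>M bu by (intro add_mono) auto
        qed (use L0 in auto)
        also have "\<dots> = 2*M*L * norm (\<theta> v - \<theta> u)" by (simp add: algebra_simps)
        also have "\<dots> \<le> 2*M*L * (norm (\<theta> v - \<theta> u) + \<bar>v - u\<bar>)"
          using Mnn L0 by (intro mult_left_mono) auto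
        finally show "\<bar>F v - F u\<bar> \<le> 2*M*L * (norm (\<theta> v - \<theta> u) + \<bar>v - u\<bar>)" .
      qed
      show "negligible N" by (rule N)
      show "\<forall>x\<in>{0..s} - N. \<forall>e>0. \<exists>d>0. \<forall>y\<in>{0..s}.
              (x \<le> y \<and> y < x + d \<longrightarrow> F y - F x \<le> e * (y - x)) \<and>
              (x - d < y \<and> y \<le> x \<longrightarrow> F x - F y \<le> e * (x - y))"
      proof (intro ballI allI impI)
        fix x e assume x: "x \<in> {0..s} - N" and e: "(e::real) > 0"
        have xd: "(\<theta> has_vector_derivative V x) (at x)" using Nder x by auto
        define w where "w \<tau> = \<Phi> (\<theta> \<tau>) - Y" for \<tau>
        define D where "D = rg (\<theta> x) \<bullet> V x"
        have wder: "(w has_derivative (\<lambda>h. h *\<^sub>R Dm (\<theta> x) (V x))) (at x)"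
        proof -
          have "((\<Phi> \<circ> \<theta>) has_derivative (Dm (\<theta> x) \<circ> (\<lambda>h. h *\<^sub>R V x))) (at x)"
            using diff_chain_at[OF xd[unfolded has_vector_derivative_def] \<Phi>der] .
          then have "((\<lambda>\<tau>. \<Phi> (\<theta> \<tau>)) has_derivative (\<lambda>h. h *\<^sub>R Dm (\<theta> x) (V x))) (at x)"
          proof -
            interpret Dx: bounded_linear "Dm (\<theta> x)" by (rule bl)
            show ?thesis using \<open>((\<Phi> \<circ> \<theta>) has_derivative (Dm (\<theta> x) \<circ> (\<lambda>h. h *\<^sub>R V x))) (at x)\<close>
              by (simp add: o_def Dx.scaleR)
          qed
          from has_derivative_diff[OF this has_derivative_const[of Y]]
          show ?thesis unfolding w_def by simp
        qed
        have Fder: "(F has_derivative (\<lambda>h. D * h)) (at x)"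
        proof -
          have "((\<lambda>\<tau>. w \<tau> \<bullet> w \<tau>) has_derivative (\<lambda>h. w x \<bullet> (h *\<^sub>R Dm (\<theta> x) (V x)) + (h *\<^sub>R Dm (\<theta> x) (V x)) \<bullet> w x)) (at x)"
            by (rule has_derivative_inner[OF wder wder])
          moreover have "(\<lambda>\<tau>. w \<tau> \<bullet> w \<tau>) = F" by (simp add: fun_eq_iff F_def w_def power2_norm_eq_inner)
          moreover have "(\<lambda>h. w x \<bullet> (h *\<^sub>R Dm (\<theta> x) (V x)) + (h *\<^sub>R Dm (\<theta> x) (V x)) \<bullet> w x) = (\<lambda>h. D * h)"
          proof -
            have DW: "D = 2 * (w x \<bullet> Dm (\<theta> x) (V x))" using rg_inner[of "\<theta> x" "V x"] by (simp add: D_def w_def)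
            show ?thesis unfolding DW by (simp add: fun_eq_iff inner_commute[of _ "w x"] algebra_simps)
          qed
          ultimately show ?thesis by simp
        qed
        have D0: "D \<le> 0"
        proof -
          have "D = - (rg (\<theta> x) \<bullet> rg (\<theta> x)) - sl x * (rg (\<theta> x) \<bullet> (\<theta> x - \<theta>0))"
            by (simp add: D_def V_def inner_diff_right)
          moreover have "rg (\<theta> x) \<bullet> rg (\<theta> x) \<ge> 0" by simp
          moreover have "sl x * (rg (\<theta> x) \<bullet> (\<theta> x - \<theta>0)) \<ge> 0"
            using sl_eq[of x] lam_pos by (auto simp: mult_nonneg_nonneg)
          ultimately show ?thesis by linarith
        qed
        obtain d where d: "d > 0" and dP: "\<forall>y. (x \<le> y \<and> y < x + d \<longrightarrow> F y - F x \<le> e * (y - x)) \<and>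
                     (x - d < y \<and> y \<le> x \<longrightarrow> F x - F y \<le> e * (x - y))"
          using deriv_loc[OF Fder D0 e] by blast
        show "\<exists>d>0. \<forall>y\<in>{0..s}. (x \<le> y \<and> y < x + d \<longrightarrow> F y - F x \<le> e * (y - x)) \<and>
              (x - d < y \<and> y \<le> x \<longrightarrow> F x - F y \<le> e * (x - y))" using d dP by blast
      qed
    qed
    then have "(norm (\<Phi> (\<theta> s) - Y))^2 \<le> R0^2" using init by (simp add: F_def R0_def)
    then show "norm (\<Phi> (\<theta> s) - Y) \<le> R0" using R0nn by (rule power2_le_imp_le)
  qed
  define G where "G = 2 * L * R0"
  have gbound: "\<And>s. s \<in> {0..t} \<Longrightarrow> norm (rg (\<theta> s)) \<le> G"
  proof -
    fix s assume s: "s \<in> {0..t}"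
    have "norm (rg (\<theta> s)) \<le> 2 * L * norm (\<Phi> (\<theta> s) - Y)" using rg_bound ballt s by blast
    also have "\<dots> \<le> 2 * L * R0" using risk_mono[OF s] L0 by (simp add: mult_left_mono)
    finally show "norm (rg (\<theta> s)) \<le> G" by (simp add: G_def)
  qed
  have G0: "G \<ge> 0" using L0 R0nn by (simp add: G_def)
  define hf where "hf s = rg (\<theta> s) \<bullet> (\<theta> s - \<theta>0)" for s
  have hcont: "continuous_on {0..t} hf"
    unfolding hf_def by (intro continuous_intros continuous_on_compose2[OF rg_cont \<theta>cont] \<theta>cont) auto
  define A where "A = {0..t} \<inter> hf -` {0..}"
  have Aclosed: "closed A" unfolding A_def by (rule continuous_closed_preimage[OF hcont]) auto
  have slA: "\<And>s. s \<in> {0..t} \<Longrightarrow> lam * indicat_real A s = sl s"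
    by (simp add: sl_eq A_def hf_def indicator_def)
  have sl_int: "sl integrable_on {0..t}"
  proof -
    have "compact ({0..t} \<inter> A)" using Aclosed by (intro compact_Int_closed) auto
    then have "A \<inter> {0..t} \<in> lmeasurable" using lmeasurable_compact by (simp add: Int_commute)
    then have "indicat_real A integrable_on {0..t}" using integrable_on_indicator by blast
    then have "(\<lambda>s. lam * indicat_real A s) integrable_on {0..t}" using integrable_cmul[of "indicat_real A" "{0..t}" lam] by simp
    then show ?thesis by (rule integrable_eq) (simp add: slA)
  qed
  have sl_range: "\<And>s. sl s = 0 \<or> sl s = lam" using sl_eq by auto
  have sl_nn: "\<And>s. 0 \<le> sl s" using sl_range lam_pos by (metis order_refl less_imp_le)
  have sl_le: "\<And>s. sl s \<le> lam" using sl_range lam_pos by (metis order_refl less_imp_le)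
  have sl_intsub: "\<And>u v. 0 \<le> u \<Longrightarrow> v \<le> t \<Longrightarrow> sl integrable_on {u..v}"
    by (rule integrable_on_subinterval[OF sl_int]) auto
  define \<Lambda> where "\<Lambda> u = integral {0..u} sl" for u
  have \<Lambda>diff: "\<And>u v. 0 \<le> u \<Longrightarrow> u \<le> v \<Longrightarrow> v \<le> t \<Longrightarrow> \<Lambda> v - \<Lambda> u = integral {u..v} sl"
  proof -
    fix u v :: real assume uv: "0 \<le> u" "u \<le> v" "v \<le> t"
    have "integral {0..u} sl + integral {u..v} sl = integral {0..v} sl"
      by (rule Henstock_Kurzweil_Integration.integral_combine) (use uv sl_intsub in auto)
    then show "\<Lambda> v - \<Lambda> u = integral {u..v} sl" by (simp add: \<Lambda>_def)
  qed
  have \<Lambda>bnd: "\<And>u v. 0 \<le> u \<Longrightarrow> u \<le> v \<Longrightarrow> v \<le> t \<Longrightarrow> 0 \<le> \<Lambda> v - \<Lambda> u \<and> \<Lambda> v - \<Lambda> u \<le> lam * (v - u)"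
  proof -
    fix u v :: real assume uv: "0 \<le> u" "u \<le> v" "v \<le> t"
    have "0 \<le> integral {u..v} sl" by (rule integral_nonneg) (use sl_intsub uv sl_nn in auto)
    moreover have "integral {u..v} sl \<le> integral {u..v} (\<lambda>_. lam)"
      by (rule integral_le) (use sl_intsub uv sl_le in auto)
    moreover have "integral {u..v} (\<lambda>_. lam) = lam * (v - u)" using uv by (simp add: mult.commute)
    ultimately show "0 \<le> \<Lambda> v - \<Lambda> u \<and> \<Lambda> v - \<Lambda> u \<le> lam * (v - u)" using \<Lambda>diff[OF uv] by linarith
  qed
  have \<Lambda>0: "\<Lambda> 0 = 0" by (simp add: \<Lambda>_def)
  have \<Lambda>lip: "\<And>u v. u \<in> {0..t} \<Longrightarrow> v \<in> {0..t} \<Longrightarrow> \<bar>\<Lambda> v - \<Lambda> u\<bar> \<le> lam * \<bar>v - u\<bar>"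
  proof -
    fix u v assume u: "u \<in> {0..t}" and v: "v \<in> {0..t}"
    show "\<bar>\<Lambda> v - \<Lambda> u\<bar> \<le> lam * \<bar>v - u\<bar>"
    proof (cases "u \<le> v")
      case True then show ?thesis using \<Lambda>bnd[of u v] u v by auto
    next
      case False then show ?thesis using \<Lambda>bnd[of v u] u v by auto
    qed
  qed
  have \<Lambda>loc: "\<And>x. x \<in> {0..t} \<Longrightarrow> \<exists>d>0. \<forall>y\<in>{0..t}. \<bar>y - x\<bar> < d \<longrightarrow> \<bar>\<Lambda> y - \<Lambda> x\<bar> \<le> sl x * \<bar>y - x\<bar>"
  proof -
    fix x assume x: "x \<in> {0..t}"
    show "\<exists>d>0. \<forall>y\<in>{0..t}. \<bar>y - x\<bar> < d \<longrightarrow> \<bar>\<Lambda> y - \<Lambda> x\<bar> \<le> sl x * \<bar>y - x\<bar>"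
    proof (cases "sl x = lam")
      case True
      show ?thesis
      proof (intro exI[of _ 1] conjI ballI impI)
        fix y assume y: "y \<in> {0..t}"
        show "\<bar>\<Lambda> y - \<Lambda> x\<bar> \<le> sl x * \<bar>y - x\<bar>" using \<Lambda>lip[OF x y] True by simp
      qed simp
    next
      case False
      then have sl0: "sl x = 0" using sl_range[of x] by blast
      then have hneg: "hf x < 0" using sl_eq[of x] lam_pos by (auto simp: hf_def split: if_splits)
      have "\<exists>d>0. \<forall>y\<in>{0..t}. dist y x < d \<longrightarrow> dist (hf y) (hf x) < - hf x"
        using hcont[unfolded continuous_on_iff, rule_format, OF x, of "- hf x"] hneg by simp
      then obtain d where d: "d > 0" and dP: "\<forall>y\<in>{0..t}. dist y x < d \<longrightarrow> dist (hf y) (hf x) < - hf x" by blast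
      have zero: "\<And>s. s \<in> {0..t} \<Longrightarrow> \<bar>s - x\<bar> < d \<Longrightarrow> sl s = 0"
      proof -
        fix s assume s: "s \<in> {0..t}" "\<bar>s - x\<bar> < d"
        then have "dist (hf s) (hf x) < - hf x" using dP by (simp add: dist_real_def)
        then have "hf s < 0" by (simp add: dist_real_def)
        then show "sl s = 0" using sl_eq[of s] by (simp add: hf_def)
      qed
      show ?thesis
      proof (intro exI[of _ d] conjI ballI impI d)
        fix y assume y: "y \<in> {0..t}" and yd: "\<bar>y - x\<bar> < d"
        have "\<Lambda> y - \<Lambda> x = 0"
        proof (cases "x \<le> y")
          case True
          have "\<Lambda> y - \<Lambda> x = integral {x..y} sl" using \<Lambda>diff[of x y] True x y by auto
          also have "\<dots> = integral {x..y} (\<lambda>_. 0::real)"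
            by (rule integral_cong) (use zero x y yd True in auto)
          finally show ?thesis by simp
        next
          case False
          have "\<Lambda> x - \<Lambda> y = integral {y..x} sl" using \<Lambda>diff[of y x] False x y by auto
          also have "\<dots> = integral {y..x} (\<lambda>_. 0::real)"
            by (rule integral_cong) (use zero x y yd False in auto)
          finally show ?thesis by simp
        qed
        then show "\<bar>\<Lambda> y - \<Lambda> x\<bar> \<le> sl x * \<bar>y - x\<bar>" using sl0 by simp
      qed
    qed
  qed
  define K1 where "K1 = exp (lam * t)"
  define E where "E s = exp (\<Lambda> s)" for s
  have Epos: "\<And>s. E s > 0" by (simp add: E_def)
  have Ebnd: "\<And>s. s \<in> {0..t} \<Longrightarrow> E s \<le> K1"
  proof -
    fix s assume s: "s \<in> {0..t}"
    have "\<Lambda> s \<le> lam * s" using \<Lambda>bnd[of 0 s] s \<Lambda>0 by auto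
    also have "\<dots> \<le> lam * t" using s lam_pos by (intro mult_left_mono) auto
    finally show "E s \<le> K1" by (simp add: E_def K1_def)
  qed
  have Emono: "\<And>u v. 0 \<le> u \<Longrightarrow> u \<le> v \<Longrightarrow> v \<le> t \<Longrightarrow> E u \<le> E v"
    using \<Lambda>bnd by (simp add: E_def)
  have Ediff: "\<And>u v. E v - E u \<le> E v * (\<Lambda> v - \<Lambda> u)" by (simp add: E_def exp_diff_le)
  have \<Lambda>cont: "continuous_on {0..t} \<Lambda>"
  proof (rule lipschitz_on_continuous_on)
    show "lam-lipschitz_on {0..t} \<Lambda>"
      by (rule lipschitz_onI) (use \<Lambda>lip lam_pos in \<open>auto simp: dist_real_def abs_minus_commute\<close>)
  qed
  have Econt: "continuous_on {0..t} E" unfolding E_def by (intro continuous_intros \<Lambda>cont)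
  define I where "I s = integral {0..s} E" for s
  have E_int: "\<And>u v. 0 \<le> u \<Longrightarrow> v \<le> t \<Longrightarrow> E integrable_on {u..v}"
    by (rule integrable_continuous_interval, rule continuous_on_subset[OF Econt]) auto
  have Idiff: "\<And>u v. 0 \<le> u \<Longrightarrow> u \<le> v \<Longrightarrow> v \<le> t \<Longrightarrow> I v - I u = integral {u..v} E"
  proof -
    fix u v :: real assume uv: "0 \<le> u" "u \<le> v" "v \<le> t"
    have "integral {0..u} E + integral {u..v} E = integral {0..v} E"
      by (rule Henstock_Kurzweil_Integration.integral_combine) (use uv E_int in auto)
    then show "I v - I u = integral {u..v} E" by (simp add: I_def)
  qed
  have Ibnd: "\<And>u v. 0 \<le> u \<Longrightarrow> u \<le> v \<Longrightarrow> v \<le> t \<Longrightarrow> E u * (v - u) \<le> I v - I u \<and> I v - I u \<le> E v * (v - u)"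
  proof -
    fix u v :: real assume uv: "0 \<le> u" "u \<le> v" "v \<le> t"
    have "integral {u..v} (\<lambda>_. E u) \<le> integral {u..v} E"
      by (rule integral_le) (use E_int uv Emono in auto)
    moreover have "integral {u..v} E \<le> integral {u..v} (\<lambda>_. E v)"
      by (rule integral_le) (use E_int uv Emono in auto)
    ultimately show "E u * (v - u) \<le> I v - I u \<and> I v - I u \<le> E v * (v - u)"
      using Idiff[OF uv] uv by (simp add: mult.commute)
  qed
  have I0: "I 0 = 0" by (simp add: I_def)
  define \<phi> where "\<phi> s = norm (\<theta> s - \<theta>0)" for s
  have \<phi>bnd: "\<And>s. s \<in> {0..t} \<Longrightarrow> 0 \<le> \<phi> s \<and> \<phi> s \<le> r"
    using ballt by (auto simp: \<phi>_def dist_norm norm_minus_commute)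
  define F where "F s = E s * \<phi> s - G * I s" for s
  define C where "C = K1 * (1 + lam * r + G)"
  have K1pos: "K1 > 0" by (simp add: K1_def)
  have Ft: "F t \<le> F 0"
  proof (rule GGL[where \<theta>=\<theta> and C=C and N=N and F=F and a=0 and b=t])
    show "0 \<le> t" by (rule t_nonneg)
    show "abs_continuous_on {0..t} \<theta>" using ac t_nonneg by auto
    show "0 \<le> C" using K1pos lam_pos r_pos G0 by (simp add: C_def)
    show "negligible N" by (rule N)
    show "\<forall>u\<in>{0..t}. \<forall>v\<in>{0..t}. \<bar>F v - F u\<bar> \<le> C * (norm (\<theta> v - \<theta> u) + \<bar>v - u\<bar>)"
    proof (intro ballI)
      fix u v assume u: "u \<in> {0..t}" and v: "v \<in> {0..t}"
      have dE: "\<bar>E v - E u\<bar> \<le> K1 * (lam * \<bar>v - u\<bar>)"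
      proof -
        have "\<bar>E v - E u\<bar> \<le> K1 * \<bar>\<Lambda> v - \<Lambda> u\<bar>"
        proof (cases "\<Lambda> u \<le> \<Lambda> v")
          case True
          then have "E u \<le> E v" by (simp add: E_def)
          then have "\<bar>E v - E u\<bar> = E v - E u" by simp
          also have "\<dots> \<le> E v * (\<Lambda> v - \<Lambda> u)" by (rule Ediff)
          also have "\<dots> \<le> K1 * \<bar>\<Lambda> v - \<Lambda> u\<bar>" using Ebnd[OF v] True Epos[of v] by (intro mult_mono) auto
          finally show ?thesis .
        next
          case False
          then have "E v \<le> E u" by (simp add: E_def)
          then have "\<bar>E v - E u\<bar> = E u - E v" by simp
          also have "\<dots> \<le> E u * (\<Lambda> u - \<Lambda> v)" by (rule Ediff)
          also have "\<dots> \<le> K1 * \<bar>\<Lambda> v - \<Lambda> u\<bar>" using Ebnd[OF u] False Epos[of u] by (intro mult_mono) auto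
          finally show ?thesis .
        qed
        also have "\<dots> \<le> K1 * (lam * \<bar>v - u\<bar>)"
          using \<Lambda>lip[OF u v] K1pos by (intro mult_left_mono) auto
        finally show ?thesis .
      qed
      have dI: "\<bar>I v - I u\<bar> \<le> K1 * \<bar>v - u\<bar>"
      proof (cases "u \<le> v")
        case True
        have b: "E u * (v - u) \<le> I v - I u" "I v - I u \<le> E v * (v - u)" using Ibnd[of u v] u v True by auto
        have "0 \<le> E u * (v - u)" using Epos[of u] True by simp
        then have "\<bar>I v - I u\<bar> = I v - I u" using b by simp
        also have "\<dots> \<le> E v * (v - u)" by (rule b(2))
        also have "\<dots> \<le> K1 * (v - u)" using Ebnd[OF v] True by (intro mult_right_mono) auto
        finally show ?thesis using True by simp
      next
        case False
        have b: "E v * (u - v) \<le> I u - I v" "I u - I v \<le> E u * (u - v)" using Ibnd[of v u] u v False by auto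
        have "0 \<le> E v * (u - v)" using Epos[of v] False by simp
        then have "\<bar>I v - I u\<bar> = I u - I v" using b by simp
        also have "\<dots> \<le> E u * (u - v)" by (rule b(2))
        also have "\<dots> \<le> K1 * (u - v)" using Ebnd[OF u] False by (intro mult_right_mono) auto
        finally show ?thesis using False by simp
      qed
      have d\<phi>: "\<bar>\<phi> v - \<phi> u\<bar> \<le> norm (\<theta> v - \<theta> u)"
        using norm_triangle_ineq3[of "\<theta> v - \<theta>0" "\<theta> u - \<theta>0"] by (simp add: \<phi>_def)
      have eq: "F v - F u = E v * (\<phi> v - \<phi> u) + (E v - E u) * \<phi> u - G * (I v - I u)"
        by (simp add: F_def algebra_simps)
      have "\<bar>F v - F u\<bar> \<le> E v * \<bar>\<phi> v - \<phi> u\<bar> + \<bar>E v - E u\<bar> * \<phi> u + G * \<bar>I v - I u\<bar>"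
      proof -
        have a1: "\<bar>E v * (\<phi> v - \<phi> u)\<bar> = E v * \<bar>\<phi> v - \<phi> u\<bar>" using Epos[of v] by (simp add: abs_mult)
        have a2: "\<bar>(E v - E u) * \<phi> u\<bar> = \<bar>E v - E u\<bar> * \<phi> u" using \<phi>bnd[OF u] by (simp add: abs_mult)
        have a3: "\<bar>G * (I v - I u)\<bar> = G * \<bar>I v - I u\<bar>" using G0 by (simp add: abs_mult)
        have tri: "\<And>x y z::real. \<bar>x + y - z\<bar> \<le> \<bar>x\<bar> + \<bar>y\<bar> + \<bar>z\<bar>" by arith
        show ?thesis unfolding eq using tri[of "E v * (\<phi> v - \<phi> u)" "(E v - E u) * \<phi> u" "G * (I v - I u)"] a1 a2 a3 by simp
      qed
      also have "\<dots> \<le> K1 * norm (\<theta> v - \<theta> u) + K1 * (lam * \<bar>v - u\<bar>) * r + G * (K1 * \<bar>v - u\<bar>)"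
      proof (intro add_mono)
        show "E v * \<bar>\<phi> v - \<phi> u\<bar> \<le> K1 * norm (\<theta> v - \<theta> u)"
          using Ebnd[OF v] d\<phi> K1pos Epos[of v] by (intro mult_mono) auto
        show "\<bar>E v - E u\<bar> * \<phi> u \<le> K1 * (lam * \<bar>v - u\<bar>) * r"
          using dE \<phi>bnd[OF u] K1pos lam_pos by (intro mult_mono) auto
        show "G * \<bar>I v - I u\<bar> \<le> G * (K1 * \<bar>v - u\<bar>)" using dI G0 by (intro mult_left_mono) auto
      qed
      also have "\<dots> \<le> C * (norm (\<theta> v - \<theta> u) + \<bar>v - u\<bar>)"
      proof -
        have "K1 * norm (\<theta> v - \<theta> u) + K1 * (lam * \<bar>v - u\<bar>) * r + G * (K1 * \<bar>v - u\<bar>)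
              = K1 * norm (\<theta> v - \<theta> u) + K1 * (lam * r + G) * \<bar>v - u\<bar>" by (simp add: algebra_simps)
        also have "\<dots> \<le> K1 * (1 + lam * r + G) * norm (\<theta> v - \<theta> u) + K1 * (1 + lam * r + G) * \<bar>v - u\<bar>"
          using K1pos lam_pos r_pos G0 by (intro add_mono mult_right_mono mult_left_mono) auto
        finally show ?thesis by (simp add: C_def algebra_simps)
      qed
      finally show "\<bar>F v - F u\<bar> \<le> C * (norm (\<theta> v - \<theta> u) + \<bar>v - u\<bar>)" .
    qed
    show "\<forall>x\<in>{0..t} - N. \<forall>e>0. \<exists>d>0. \<forall>y\<in>{0..t}.
              (x \<le> y \<and> y < x + d \<longrightarrow> F y - F x \<le> e * (y - x)) \<and>
              (x - d < y \<and> y \<le> x \<longrightarrow> F x - F y \<le> e * (x - y))"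
    proof (intro ballI allI impI)
      fix x e assume x: "x \<in> {0..t} - N" and e: "(e::real) > 0"
      have x0: "x \<in> {0..t}" using x by auto
      have xd: "(\<theta> has_vector_derivative V x) (at x)" using Nder x by auto
      define lx where "lx = sl x"
      define g where "g = rg (\<theta> x)"
      have gG: "norm g \<le> G" using gbound x0 g_def by auto
      have lx01: "0 \<le> lx" "lx \<le> lam" using sl_nn sl_le lx_def by auto
      have Vx: "V x = - g - lx *\<^sub>R (\<theta> x - \<theta>0)" by (simp add: V_def g_def lx_def)
      define Q where "Q = G + lam * r + 1"
      have Q: "Q > 0" using G0 lam_pos r_pos by (simp add: Q_def add_nonneg_pos)
      define e1 where "e1 = e / (2 * K1)"
      define e2 where "e2 = e / (2 * Q)"
      have e1p: "e1 > 0" using e K1pos by (simp add: e1_def)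
      have e2p: "e2 > 0" using e Q by (simp add: e2_def)
      have e1K: "e1 * K1 = e / 2" using K1pos by (simp add: e1_def)
      have Ge2: "G * e2 \<le> e / 2"
      proof -
        have "G * e2 = (e / 2) * (G / Q)" by (simp add: e2_def)
        also have "G / Q \<le> 1" using Q G0 lam_pos r_pos by (simp add: divide_le_eq Q_def)
        then have "(e / 2) * (G / Q) \<le> (e / 2) * 1" using e by (intro mult_left_mono) auto
        finally show ?thesis by simp
      qed
      have Le2: "(lam * r) * e2 \<le> e / 2"
      proof -
        have "(lam * r) * e2 = (e / 2) * ((lam * r) / Q)" by (simp add: e2_def)
        also have "(lam * r) / Q \<le> 1" using Q G0 lam_pos r_pos by (simp add: divide_le_eq Q_def)
        then have "(e / 2) * ((lam * r) / Q) \<le> (e / 2) * 1" using e by (intro mult_left_mono) auto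
        finally show ?thesis by simp
      qed
      obtain d1 where d1: "d1 > 0" and d1P: "\<forall>y. norm (y - x) < d1 \<longrightarrow> norm (\<theta> y - \<theta> x - (y - x) *\<^sub>R V x) \<le> e1 * norm (y - x)"
        using xd[unfolded has_vector_derivative_def has_derivative_at_alt] e1p by blast
      obtain d2 where d2: "d2 > 0" and d2P: "\<forall>y\<in>{0..t}. \<bar>y - x\<bar> < d2 \<longrightarrow> \<bar>\<Lambda> y - \<Lambda> x\<bar> \<le> sl x * \<bar>y - x\<bar>"
        using \<Lambda>loc[OF x0] by blast
      obtain d3 where d3: "d3 > 0" and d3P: "\<forall>y\<in>{0..t}. dist y x < d3 \<longrightarrow> dist (E y) (E x) < e2"
        using Econt[unfolded continuous_on_iff, rule_format, OF x0 e2p] by blast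
      define d where "d = min (min d1 d2) (min d3 (1 / (lam + 1)))"
      have d: "d > 0" using d1 d2 d3 lam_pos by (simp add: d_def)
      have \<phi>x: "0 \<le> \<phi> x" "\<phi> x \<le> r" using \<phi>bnd[OF x0] by auto
      show "\<exists>d>0. \<forall>y\<in>{0..t}. (x \<le> y \<and> y < x + d \<longrightarrow> F y - F x \<le> e * (y - x)) \<and>
              (x - d < y \<and> y \<le> x \<longrightarrow> F x - F y \<le> e * (x - y))"
      proof (intro exI[of _ d] conjI ballI d impI)
        fix y assume y: "y \<in> {0..t}" and xy: "x \<le> y \<and> y < x + d"
        define \<tau> where "\<tau> = y - x"
        have \<tau>: "0 \<le> \<tau>" "\<tau> < d" using xy \<tau>_def by auto
        have err: "norm (\<theta> y - \<theta> x - \<tau> *\<^sub>R V x) \<le> e1 * \<tau>"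
          using d1P[rule_format, of y] \<tau> \<tau>_def d_def by auto
        have \<tau>lx: "\<tau> * lx \<le> 1"
        proof -
          have "\<tau> * lx \<le> (1 / (lam + 1)) * lam" using \<tau> lx01 d_def by (intro mult_mono) auto
          also have "\<dots> \<le> 1" using lam_pos by (simp add: divide_le_eq)
          finally show ?thesis .
        qed
        have \<phi>y: "\<phi> y \<le> (1 - \<tau>*lx) * \<phi> x + \<tau>*G + e1*\<tau>"
        proof -
          have eq: "\<theta> y - \<theta>0 = (1 - \<tau>*lx) *\<^sub>R (\<theta> x - \<theta>0) - \<tau> *\<^sub>R g + (\<theta> y - \<theta> x - \<tau> *\<^sub>R V x)"
            by (simp add: Vx algebra_simps)
          have "\<phi> y \<le> norm ((1 - \<tau>*lx) *\<^sub>R (\<theta> x - \<theta>0)) + norm (\<tau> *\<^sub>R g) + norm (\<theta> y - \<theta> x - \<tau> *\<^sub>R V x)"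
            unfolding \<phi>_def eq by (rule tri3a)
          also have "\<dots> \<le> (1 - \<tau>*lx) * \<phi> x + \<tau>*G + e1*\<tau>"
            using \<tau>lx \<tau> gG err by (intro add_mono) (auto simp: \<phi>_def mult_left_mono)
          finally show ?thesis .
        qed
        have \<Lambda>d: "\<Lambda> y - \<Lambda> x \<le> lx * \<tau>"
          using d2P[rule_format, OF y] \<tau> \<tau>_def d_def lx_def by auto
        have Ed: "E y - E x \<le> E y * lx * \<tau>"
        proof -
          have "E y - E x \<le> E y * (\<Lambda> y - \<Lambda> x)" by (rule Ediff)
          also have "\<dots> \<le> E y * (lx * \<tau>)" using \<Lambda>d Epos[of y] by (intro mult_left_mono) auto
          finally show ?thesis by (simp add: mult.assoc)
        qed
        have Id: "I y - I x \<ge> E x * \<tau>" using Ibnd[of x y] x0 y xy \<tau>_def by auto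
        have Ee: "E y - E x \<le> e2" using d3P[rule_format, OF y] \<tau> \<tau>_def d_def by (auto simp: dist_real_def)
        have "(E y * \<phi> y - G * I y) - (E x * \<phi> x - G * I x) \<le> \<tau> * (G * e2 + e1 * K1)"
          by (rule fwd_step[OF \<tau>(1) Epos \<phi>y Ed Id \<phi>x(1) G0 Ee Ebnd[OF y] less_imp_le[OF e1p]])
        also have "\<dots> \<le> \<tau> * e" using Ge2 e1K \<tau> by (intro mult_left_mono) auto
        finally show "F y - F x \<le> e * (y - x)" by (simp add: F_def \<tau>_def mult.commute)
      next
        fix y assume y: "y \<in> {0..t}" and xy: "x - d < y \<and> y \<le> x"
        define \<tau> where "\<tau> = x - y"
        have \<tau>: "0 \<le> \<tau>" "\<tau> < d" using xy \<tau>_def by auto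
        have err: "norm (\<theta> y - \<theta> x + \<tau> *\<^sub>R V x) \<le> e1 * \<tau>"
          using d1P[rule_format, of y] \<tau> \<tau>_def d_def by (auto simp: algebra_simps)
        have \<phi>x2: "(1 + \<tau>*lx) * \<phi> x \<le> \<phi> y + \<tau>*G + e1*\<tau>"
        proof -
          have eq: "(1 + \<tau>*lx) *\<^sub>R (\<theta> x - \<theta>0) = (\<theta> y - \<theta>0) - \<tau> *\<^sub>R g - (\<theta> y - \<theta> x + \<tau> *\<^sub>R V x)"
            by (simp add: Vx algebra_simps)
          have "(1 + \<tau>*lx) * \<phi> x = norm ((1 + \<tau>*lx) *\<^sub>R (\<theta> x - \<theta>0))"
            using \<tau> lx01 by (simp add: \<phi>_def)
          also have "\<dots> \<le> norm (\<theta> y - \<theta>0) + norm (\<tau> *\<^sub>R g) + norm (\<theta> y - \<theta> x + \<tau> *\<^sub>R V x)"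
            unfolding eq by (rule tri3b)
          also have "\<dots> \<le> \<phi> y + \<tau>*G + e1*\<tau>"
            using \<tau> gG err by (intro add_mono) (auto simp: \<phi>_def mult_left_mono)
          finally show ?thesis .
        qed
        have \<Lambda>d: "\<Lambda> x - \<Lambda> y \<le> lx * \<tau>"
          using d2P[rule_format, OF y] \<tau> \<tau>_def d_def lx_def by auto
        have Ed: "E x - E y \<le> E x * lx * \<tau>"
        proof -
          have "E x - E y \<le> E x * (\<Lambda> x - \<Lambda> y)" by (rule Ediff)
          also have "\<dots> \<le> E x * (lx * \<tau>)" using \<Lambda>d Epos[of x] by (intro mult_left_mono) auto
          finally show ?thesis by (simp add: mult.assoc)
        qed
        have Id: "I x - I y \<ge> E y * \<tau>" using Ibnd[of y x] x0 y xy \<tau>_def by auto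
        have Ee: "E x - E y \<le> e2" using d3P[rule_format, OF y] \<tau> \<tau>_def d_def by (auto simp: dist_real_def)
        have lphi: "0 \<le> lx * \<phi> x" "lx * \<phi> x \<le> lam * r" using lx01 \<phi>x by (auto intro: mult_mono)
        have "(E x * \<phi> x - G * I x) - (E y * \<phi> y - G * I y) \<le> \<tau> * (e1 * K1 + (lam * r) * e2)"
          by (rule bwd_step[OF \<tau>(1) Epos \<phi>x2 Ed Id \<phi>x(1) G0 Ee Ebnd[OF y] less_imp_le[OF e1p] lphi less_imp_le[OF e2p]])
        also have "\<dots> \<le> \<tau> * e" using Le2 e1K \<tau> by (intro mult_left_mono) auto
        finally show "F x - F y \<le> e * (x - y)" by (simp add: F_def \<tau>_def mult.commute)
      qed
    qed
  qed
  have F0: "F 0 = 0" by (simp add: F_def E_def \<Lambda>0 I0 \<phi>_def init)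
  have main: "norm (\<theta> t - \<theta>0) \<le> G * integral {0..t} (\<lambda>s. exp (- (\<Lambda> t - \<Lambda> s)))"
  proof -
    have "E t * \<phi> t \<le> G * I t" using Ft F0 by (simp add: F_def)
    then have "\<phi> t \<le> G * I t / E t" using Epos[of t] by (simp add: field_simps)
    also have "G * I t / E t = G * integral {0..t} (\<lambda>s. exp (- (\<Lambda> t - \<Lambda> s)))"
    proof -
      have "integral {0..t} (\<lambda>s. exp (- (\<Lambda> t - \<Lambda> s))) = integral {0..t} (\<lambda>s. inverse (E t) *\<^sub>R E s)"
        by (rule integral_cong) (simp add: E_def exp_diff exp_minus field_simps)
      also have "\<dots> = inverse (E t) * I t" by (simp add: I_def)
      finally show ?thesis by (simp add: field_simps)
    qed
    finally show ?thesis by (simp add: \<phi>_def)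
  qed
  have second: "(\<forall>s\<in>{0..t}. sl s = lam) \<longrightarrow> norm (\<theta> t - \<theta>0) \<le> G * ((1 - exp (- lam * t)) / lam)"
  proof
    assume all: "\<forall>s\<in>{0..t}. sl s = lam"
    have \<Lambda>lin: "\<And>u. u \<in> {0..t} \<Longrightarrow> \<Lambda> u = lam * u"
    proof -
      fix u assume u: "u \<in> {0..t}"
      have "\<Lambda> u = integral {0..u} (\<lambda>_. lam)" unfolding \<Lambda>_def
        by (rule integral_cong) (use all u in auto)
      then show "\<Lambda> u = lam * u" using u by simp
    qed
    have "integral {0..t} (\<lambda>s. exp (- (\<Lambda> t - \<Lambda> s))) = integral {0..t} (\<lambda>s. exp (- (lam * t - lam * s)))"
      by (rule integral_cong) (use \<Lambda>lin t_nonneg in auto)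
    also have "\<dots> = (1 - exp (- lam * t)) / lam"
    proof (rule integral_unique)
      have "((\<lambda>s. exp (- (lam * t - lam * s))) has_integral
             ((\<lambda>s. exp (- (lam * t - lam * s)) / lam) t - (\<lambda>s. exp (- (lam * t - lam * s)) / lam) 0)) {0..t}"
      proof (rule fundamental_theorem_of_calculus[OF t_nonneg])
        fix x assume "x \<in> {0..t}"
        have "((\<lambda>s. exp (- (lam * t - lam * s)) / lam) has_real_derivative exp (- (lam * t - lam * x))) (at x within {0..t})"
          using lam_pos by (auto intro!: derivative_eq_intros)
        then show "((\<lambda>s. exp (- (lam * t - lam * s)) / lam) has_vector_derivative exp (- (lam * t - lam * x))) (at x within {0..t})"
          by (simp add: has_real_derivative_iff_has_vector_derivative)
      qed
      then show "((\<lambda>s. exp (- (lam * t - lam * s))) has_integral (1 - exp (- lam * t)) / lam) {0..t}"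
        using lam_pos by (simp add: diff_divide_distrib)
    qed
    finally show "norm (\<theta> t - \<theta>0) \<le> G * ((1 - exp (- lam * t)) / lam)" using main by simp
  qed
  show ?thesis
    using main second unfolding Let_def G_def R0_def \<Lambda>_def sl_def \<Phi>_def by simp
qed

end
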